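(* Let $\tau>1$, let $\kappa\ge3$ be an integer and let $x^\dagger\in\mathcal X$ satisfy $\bar k^\delta_{\mathrm{pr}}(x^\dagger)\ge\kappa$. Then on the event $\Omega_\kappa$ one has $k^\delta_{\mathrm{pr}}(x^\dagger)<\infty$ and $$k^\delta_{\mathrm{dp}}\le A_\tau\,k^\delta_{\mathrm{pr}}(x^\dagger),\qquad A_\tau:=\Big(\frac{\tau+1}{\tau-1}\Big)^2;$$ in particular $k^\delta_{\mathrm{dp}}<\infty$ on $\Omega_\kappa$.
   Context: Setting: $K:\mathcal X\to\mathcal Y$ compact injective with dense range between infinite-dimensional real separable Hilbert spaces, singular system $(\sigma_j,v_j,u_j)$ ($(v_j),(u_j)$ orthonormal bases, $\sigma_1\ge\sigma_2\ge\dots>0$, $Kv_j=\sigma_ju_j$, $K^*u_j=\sigma_jv_j$); $y^\dagger=Kx^\dagger$, $\delta>0$, data $(y^\delta,u_j):=(y^\dagger,u_j)+\delta(Z,u_j)$ with real random variables $(Z,u_j)$. For $m\in\mathbb N$: $k^\delta_{\mathrm{dp}}(m):=\min\{k\in\{0,\dots,m\}:\sqrt{\sum_{j=k+1}^m(y^\delta,u_j)^2}\le\tau\sqrt m\,\delta\}$, $k^\delta_{\mathrm{dp}}:=\sup_{m\in\mathbb N}k^\delta_{\mathrm{dp}}(m)$. With $\min\emptyset=\infty$: $k^\delta_{\mathrm{pr}}(x^\dagger):=\min\{k\in\mathbb N_0:\sum_{j=1}^k(y^\delta-y^\dagger,u_j)^2\ge\sum_{j=k+1}^\infty(y^\dagger,u_j)^2\}$,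 $\bar k^\delta_{\mathrm{pr}}(x^\dagger):=\min\{k\in\mathbb N_0:\delta^2k\ge\sum_{j=k+1}^\infty(y^\dagger,u_j)^2\}$. With $\varepsilon_\tau:=\min\big(\frac{(\tau+1)^2}{4}-1,\frac13\big)$, $$\Omega_\kappa:=\Big\{\Big|\sum_{j=1}^m(y^\delta-y^\dagger,u_j)^2-m\delta^2\Big|\le\varepsilon_\tau m\delta^2\ \text{for all integers } m\ge\kappa/3\Big\}.$$ *)

theory Defs
  imports "HOL-Analysis.Analysis" "HOL-Library.Extended_Nat"
begin

text \<open>Coordinate (singular-system) representation. Indices j start at 1.
  sv j : singular values, xc j = (x-dagger, v_j), z j = (Z, u_j) evaluated at a fixed outcome.
  Then (y-dagger, u_j) = sv j * xc j and (y-delta, u_j) = sv j * xc j + delta * z j.\<close>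

definition ydag :: "(nat \<Rightarrow> real) \<Rightarrow> (nat \<Rightarrow> real) \<Rightarrow> nat \<Rightarrow> real" where
  "ydag sv xc j = sv j * xc j"

definition ydelta :: "(nat \<Rightarrow> real) \<Rightarrow> (nat \<Rightarrow> real) \<Rightarrow> real \<Rightarrow> (nat \<Rightarrow> real) \<Rightarrow> nat \<Rightarrow> real" where
  "ydelta sv xc delta z j = ydag sv xc j + delta * z j"

text \<open>Truncated discrepancy principle k_dp(m) (minimum over {0..m}; k = m always qualifies).\<close>
definition kdp_m :: "real \<Rightarrow> real \<Rightarrow> (nat \<Rightarrow> real) \<Rightarrow> nat \<Rightarrow> nat" where
  "kdp_m tau delta yd m =
     (LEAST k. k \<le> m \<and> sqrt (\<Sum>j\<in>{k+1..m}. (yd j)\<^sup>2) \<le> tau * sqrt (real m) * delta)"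

definition kdp :: "real \<Rightarrow> real \<Rightarrow> (nat \<Rightarrow> real) \<Rightarrow> enat" where
  "kdp tau delta yd = (SUP m\<in>{1..}. enat (kdp_m tau delta yd m))"

definition enat_min :: "(nat \<Rightarrow> bool) \<Rightarrow> enat" where
  "enat_min P = (if \<exists>k. P k then enat (LEAST k. P k) else \<infinity>)"

definition tail :: "(nat \<Rightarrow> real) \<Rightarrow> nat \<Rightarrow> real" where
  "tail yt k = (\<Sum>i. (yt (i + k + 1))\<^sup>2)"

definition kpr :: "(nat \<Rightarrow> real) \<Rightarrow> (nat \<Rightarrow> real) \<Rightarrow> enat" where
  "kpr yt yd = enat_min (\<lambda>k. (\<Sum>j\<in>{1..k}. (yd j - yt j)\<^sup>2) \<ge> tail yt k)"

definition kbar_pr :: "real \<Rightarrow> (nat \<Rightarrow> real) \<Rightarrow> enat" where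
  "kbar_pr delta yt = enat_min (\<lambda>k. delta\<^sup>2 * real k \<ge> tail yt k)"

definition eps_tau :: "real \<Rightarrow> real" where
  "eps_tau tau = min ((tau + 1)\<^sup>2 / 4 - 1) (1/3)"

text \<open>The event \<Omega>_\<kappa>, as a property of the realized data.\<close>
definition Omega :: "real \<Rightarrow> real \<Rightarrow> nat \<Rightarrow> (nat \<Rightarrow> real) \<Rightarrow> (nat \<Rightarrow> real) \<Rightarrow> bool" where
  "Omega tau delta \<kappa> yt yd \<longleftrightarrow>
     (\<forall>m::nat. real m \<ge> real \<kappa> / 3 \<longrightarrow>
        \<bar>(\<Sum>j\<in>{1..m}. (yd j - yt j)\<^sup>2) - real m * delta\<^sup>2\<bar> \<le> eps_tau tau * real m * delta\<^sup>2)"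

definition A_tau :: "real \<Rightarrow> real" where
  "A_tau tau = ((tau + 1) / (tau - 1))\<^sup>2"

end

theory Submission
  imports Defs
begin

lemma tail_step:
  assumes "summable (\<lambda>j. (yt j)\<^sup>2)"
  shows "tail yt k = (yt (k+1))\<^sup>2 + tail yt (Suc k)"
proof -
  have s: "summable (\<lambda>i. (yt (i + k + 1))\<^sup>2)"
    using summable_iff_shift[of "\<lambda>j. (yt j)\<^sup>2" "k+1"] assms by (simp add: add.assoc)
  show ?thesis unfolding tail_def
    using suminf_split_head[OF s] by simp
qed

lemma tail_nonneg:
  assumes "summable (\<lambda>j. (yt j)\<^sup>2)"
  shows "tail yt k \<ge> 0"
proof -
  have s: "summable (\<lambda>i. (yt (i + k + 1))\<^sup>2)"
    using summable_iff_shift[of "\<lambda>j. (yt j)\<^sup>2" "k+1"] assms by (simp add: add.assoc)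
  show ?thesis unfolding tail_def by (rule suminf_nonneg[OF s]) simp
qed

lemma tail_mono:
  assumes "summable (\<lambda>j. (yt j)\<^sup>2)" "k \<le> k'"
  shows "tail yt k' \<le> tail yt k"
  using assms(2)
proof (induction k' rule: dec_induct)
  case base then show ?case by simp
next
  case (step n)
  have "tail yt (Suc n) \<le> tail yt n" using tail_step[OF assms(1), of n] by simp
  then show ?case using step by simp
qed

lemma tail_ge_sum:
  assumes "summable (\<lambda>j. (yt j)\<^sup>2)"
  shows "(\<Sum>j\<in>{k+1..k+d}. (yt j)\<^sup>2) \<le> tail yt k"
proof (induction d arbitrary: k)
  case 0 then show ?case using tail_nonneg[OF assms] by simp
next
  case (Suc d)
  have e: "{k+1..k+Suc d} = insert (k+1) {Suc k+1..Suc k+d}" by auto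
  have "(\<Sum>j\<in>{k+1..k+Suc d}. (yt j)\<^sup>2) = (yt (k+1))\<^sup>2 + (\<Sum>j\<in>{Suc k+1..Suc k+d}. (yt j)\<^sup>2)"
    unfolding e by (subst sum.insert) auto
  also have "\<dots> \<le> (yt (k+1))\<^sup>2 + tail yt (Suc k)" using Suc[of "Suc k"] by simp
  finally show ?case using tail_step[OF assms, of k] by simp
qed

lemma tail_ge_sum':
  assumes "summable (\<lambda>j. (yt j)\<^sup>2)" "k \<le> m"
  shows "(\<Sum>j\<in>{k+1..m}. (yt j)\<^sup>2) \<le> tail yt k"
  using tail_ge_sum[OF assms(1), of k "m-k"] assms(2) by simp

theorem mainTheorem11:
  fixes sv xc z :: "nat \<Rightarrow> real" and tau delta :: real and \<kappa> :: nat
  assumes sigma_pos: "\<And>j. j \<ge> 1 \<Longrightarrow> sv j > 0"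
    and sigma_mono: "\<And>i j. 1 \<le> i \<Longrightarrow> i \<le> j \<Longrightarrow> sv j \<le> sv i"
    and sigma_compact: "sv \<longlonglongrightarrow> 0"
    and xc_l2: "summable (\<lambda>j. (xc j)\<^sup>2)"
    and tau: "tau > 1" and delta: "delta > 0" and kappa: "\<kappa> \<ge> 3"
    and kbar: "kbar_pr delta (ydag sv xc) \<ge> enat \<kappa>"
    and event: "Omega tau delta \<kappa> (ydag sv xc) (ydelta sv xc delta z)"
  shows "kpr (ydag sv xc) (ydelta sv xc delta z) \<noteq> \<infinity>
       \<and> kdp tau delta (ydelta sv xc delta z) \<noteq> \<infinity>
       \<and> real (the_enat (kdp tau delta (ydelta sv xc delta z)))
           \<le> A_tau tau * real (the_enat (kpr (ydag sv xc) (ydelta sv xc delta z)))"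
proof -
  define yt where "yt = ydag sv xc"
  define yd where "yd = ydelta sv xc delta z"
  define N where "N m = (\<Sum>j\<in>{1..m}. (yd j - yt j)\<^sup>2)" for m
  define T where "T = tail yt"
  define \<epsilon> where "\<epsilon> = eps_tau tau"
  have eps_le: "\<epsilon> \<le> 1/3" and eps_le2: "1 + \<epsilon> \<le> (tau+1)\<^sup>2/4" and eps_pos: "\<epsilon> > 0"
  proof -
    have "(2::real)\<^sup>2 < (tau + 1)\<^sup>2" using tau by (intro power_strict_mono) auto
    then have "(tau + 1)\<^sup>2 / 4 - 1 > 0" by simp
    then show "\<epsilon> \<le> 1/3" "1 + \<epsilon> \<le> (tau+1)\<^sup>2/4" "\<epsilon> > 0"
      unfolding \<epsilon>_def eps_tau_def by (auto simp: min_def)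
  qed
  define M where "M = \<bar>sv 0\<bar> + \<bar>sv 1\<bar>"
  have svb: "\<bar>sv j\<bar> \<le> M" for j
  proof (cases "j = 0")
    case False
    then have "0 < sv j" "sv j \<le> sv 1" using sigma_pos sigma_mono[of 1 j] by auto
    then show ?thesis unfolding M_def by simp
  qed (simp add: M_def)
  have summ: "summable (\<lambda>j. (yt j)\<^sup>2)"
  proof (rule summable_comparison_test[OF _ summable_mult[OF xc_l2, of "M\<^sup>2"]])
    show "\<exists>N. \<forall>n\<ge>N. norm ((yt n)\<^sup>2) \<le> M\<^sup>2 * (xc n)\<^sup>2"
    proof (intro exI allI impI)
      fix n
      have "(sv n)\<^sup>2 \<le> M\<^sup>2" using svb[of n] by (metis abs_le_square_iff abs_of_nonneg abs_ge_zero order_trans)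
      then have "(sv n)\<^sup>2 * (xc n)\<^sup>2 \<le> M\<^sup>2 * (xc n)\<^sup>2" by (rule mult_right_mono) simp
      then show "norm ((yt n)\<^sup>2) \<le> M\<^sup>2 * (xc n)\<^sup>2"
        by (simp add: yt_def ydag_def power_mult_distrib)
    qed
  qed
  have Tnn: "T k \<ge> 0" for k using tail_nonneg[OF summ] T_def by simp
  have Tmono: "k \<le> k' \<Longrightarrow> T k' \<le> T k" for k k' using tail_mono[OF summ] T_def by simp
  have Nmono: "k \<le> k' \<Longrightarrow> N k \<le> N k'" for k k'
    unfolding N_def by (rule sum_mono2) auto
  have Nb: "real m \<ge> real \<kappa> / 3 \<Longrightarrow> N m \<le> (1+\<epsilon>) * m * delta\<^sup>2 \<and> N m \<ge> (1-\<epsilon>) * m * delta\<^sup>2" for m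
    using event unfolding Omega_def N_def \<epsilon>_def yt_def yd_def
    by (auto simp: abs_le_iff algebra_simps)
  have kb: "\<not> (delta\<^sup>2 * real k \<ge> T k)" if "k < \<kappa>" for k
  proof
    assume P: "delta\<^sup>2 * real k \<ge> T k"
    then have "kbar_pr delta yt = enat (LEAST k. delta\<^sup>2 * real k \<ge> T k)"
      unfolding kbar_pr_def enat_min_def T_def by auto
    moreover have "(LEAST k. delta\<^sup>2 * real k \<ge> T k) \<le> k" using P by (rule Least_le)
    ultimately show False using kbar that unfolding yt_def by auto
  qed
  define P where "P k = (N k \<ge> T k)" for k
  have kpr_eq: "kpr yt yd = enat_min P" unfolding kpr_def P_def N_def T_def ..
  define k0 where "k0 = nat \<lceil>3 * T 0 / (2 * delta\<^sup>2)\<rceil> + \<kappa>"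
  have exP: "P k0"
  proof -
    have "real k0 \<ge> real \<kappa> / 3" unfolding k0_def by simp
    then have "N k0 \<ge> (1-\<epsilon>) * k0 * delta\<^sup>2" using Nb by blast
    moreover have "(1-\<epsilon>) * k0 * delta\<^sup>2 \<ge> (2/3) * k0 * delta\<^sup>2"
      using eps_le by (intro mult_right_mono) auto
    moreover have "real k0 \<ge> 3 * T 0 / (2 * delta\<^sup>2)" unfolding k0_def
      by (metis le_add1 le_nat_iff nat_le_iff of_nat_add of_nat_mono order_trans real_nat_ceiling_ge)
    then have "(2/3) * k0 * delta\<^sup>2 \<ge> T 0" using delta by (simp add: field_simps)
    moreover have "T k0 \<le> T 0" using Tmono by simp
    ultimately show ?thesis unfolding P_def by linarith
  qed
  define K where "K = (LEAST k. P k)"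
  have PK: "P K" unfolding K_def using exP by (rule LeastI)
  have kprK: "kpr yt yd = enat K" unfolding kpr_eq enat_min_def K_def using exP by auto
  have Kge: "real K \<ge> real \<kappa> / 3"
  proof (rule ccontr)
    assume "\<not> ?thesis"
    then have Kl: "real K < real \<kappa> / 3" by simp
    define m0 where "m0 = (\<kappa> + 2) div 3"
    have m0a: "real m0 \<ge> real \<kappa> / 3" unfolding m0_def by linarith
    have m0b: "4 * m0 \<le> 3 * (\<kappa> - 1)" unfolding m0_def using kappa by presburger
    have "K \<le> m0" using Kl m0a by linarith
    then have "N K \<le> N m0" by (rule Nmono)
    also have "\<dots> \<le> (1+\<epsilon>) * m0 * delta\<^sup>2" using Nb[OF m0a] by blast
    also have "\<dots> \<le> (4/3) * m0 * delta\<^sup>2" using eps_le by (intro mult_right_mono) auto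
    also have "\<dots> \<le> real (\<kappa>-1) * delta\<^sup>2"
    proof -
      have "(4/3) * real m0 \<le> real (\<kappa> - 1)" using m0b by linarith
      then show ?thesis by (intro mult_right_mono) auto
    qed
    also have "\<dots> < T (\<kappa> - 1)" using kb[of "\<kappa>-1"] kappa by (simp add: mult.commute)
    also have "\<dots> \<le> T K" using Kl by (intro Tmono) linarith
    finally show False using PK unfolding P_def by simp
  qed
  have NK: "N K \<le> (1+\<epsilon>) * K * delta\<^sup>2" using Nb[OF Kge] by blast
  define A where "A = A_tau tau"
  have A1: "A \<ge> 1" unfolding A_def A_tau_def using tau
    by (simp add: le_divide_eq_1)
  define B where "B = nat \<lfloor>A * real K\<rfloor>"
  have KA: "real K \<le> A * real K"
    using mult_right_mono[OF A1, of "real K"] by simp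
  have KB: "K \<le> B" unfolding B_def using KA by (rule le_nat_floor)
  have bound: "kdp_m tau delta yd m \<le> B" for m
  proof (cases "real m \<le> A * real K")
    case True
    have "kdp_m tau delta yd m \<le> m" unfolding kdp_m_def
      by (rule Least_le) (use tau delta in simp)
    also have "m \<le> B" unfolding B_def using True by (simp add: le_nat_floor)
    finally show ?thesis .
  next
    case False
    then have mA: "real m > A * real K" by simp
    have "real K \<le> real m" using mA KA by linarith
    then have Km: "K \<le> m" by simp
    have mk: "real m \<ge> real \<kappa> / 3" using Km Kge by linarith
    have Nm: "N m \<le> (1+\<epsilon>) * m * delta\<^sup>2" using Nb[OF mk] by blast
    define r where "r = sqrt (real K)"
    define s where "s = sqrt (real m)"
    define c where "c = sqrt (1+\<epsilon>)"
    have t1: "tau - 1 > 0" using tau by simp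
    have "real K * (tau+1)\<^sup>2 \<le> real m * (tau-1)\<^sup>2"
      using mA t1 unfolding A_def A_tau_def by (simp add: power_divide field_simps)
    then have "sqrt (real K * (tau+1)\<^sup>2) \<le> sqrt (real m * (tau-1)\<^sup>2)"
      by (rule real_sqrt_le_mono)
    then have rs: "r * (tau+1) \<le> s * (tau-1)" unfolding r_def s_def
      using tau by (simp add: real_sqrt_mult)
    have c0: "c \<ge> 0" unfolding c_def using eps_pos by simp
    have cle: "c \<le> (tau+1)/2"
    proof -
      have "c \<le> sqrt ((tau+1)\<^sup>2/4)" unfolding c_def using eps_le2 by (rule real_sqrt_le_mono)
      also have "\<dots> = (tau+1)/2" using tau by (simp add: real_sqrt_divide)
      finally show ?thesis .
    qed
    have r0: "r \<ge> 0" and s0: "s \<ge> 0" unfolding r_def s_def by auto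
    have key: "c * (r + s) \<le> tau * s"
    proof -
      have "c * (r + s) \<le> (tau+1)/2 * (r+s)" using cle r0 s0 by (intro mult_right_mono) auto
      also have "\<dots> \<le> tau * s" using rs by (simp add: field_simps)
      finally show ?thesis .
    qed
    define e where "e j = yd j - yt j" for j
    have "sqrt (\<Sum>j\<in>{K+1..m}. (yd j)\<^sup>2) = L2_set (\<lambda>j. yt j + e j) {K+1..m}"
      unfolding L2_set_def e_def by simp
    also have "\<dots> \<le> L2_set yt {K+1..m} + L2_set e {K+1..m}" by (rule L2_set_triangle_ineq)
    also have "L2_set yt {K+1..m} \<le> sqrt (T K)" unfolding L2_set_def T_def
      by (rule real_sqrt_le_mono, rule tail_ge_sum'[OF summ Km])
    also have "\<dots> \<le> sqrt (N K)" using PK unfolding P_def by simp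
    also have "\<dots> \<le> sqrt ((1+\<epsilon>) * K * delta\<^sup>2)" using NK by simp
    also have "\<dots> = c * r * delta" unfolding c_def r_def using delta eps_pos
      by (simp add: real_sqrt_mult)
    also have "L2_set e {K+1..m} \<le> sqrt (N m)" unfolding L2_set_def N_def e_def
      by (rule real_sqrt_le_mono, rule sum_mono2) auto
    also have "\<dots> \<le> sqrt ((1+\<epsilon>) * m * delta\<^sup>2)" using Nm by simp
    also have "\<dots> = c * s * delta" unfolding c_def s_def using delta eps_pos
      by (simp add: real_sqrt_mult)
    finally have "sqrt (\<Sum>j\<in>{K+1..m}. (yd j)\<^sup>2) \<le> (c * (r + s)) * delta"
      by (simp add: algebra_simps)
    also have "\<dots> \<le> (tau * s) * delta" using key delta by (intro mult_right_mono) auto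
    finally have cond: "sqrt (\<Sum>j\<in>{K+1..m}. (yd j)\<^sup>2) \<le> tau * sqrt (real m) * delta"
      unfolding s_def by simp
    have "kdp_m tau delta yd m \<le> K" unfolding kdp_m_def
      by (rule Least_le) (use Km cond in simp)
    then show ?thesis using KB by simp
  qed
  have kdple: "kdp tau delta yd \<le> enat B" unfolding kdp_def
    by (rule SUP_least) (use bound in simp)
  then obtain n where n: "kdp tau delta yd = enat n" "n \<le> B"
    by (cases "kdp tau delta yd") auto
  have "real B \<le> A * real K" unfolding B_def
    using A1 by (simp add: of_nat_floor)
  then have "real n \<le> A * real K" using n(2) of_nat_mono[OF n(2), where ?'a=real] by linarith
  then show ?thesis using n kprK unfolding yt_def yd_def A_def by simp
qed

end
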